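(* Consider a qubit with two measurement settings $x,y\in\{0,1\}$, outcomes $\pm$, arbitrary instruments (the same instrument used for the same setting at both time steps), and let $p(ab|xy)$ be the probability of outcome $a$ for measurement $x$ at the first time step on the initial state followed by outcome $b$ for measurement $y$ at the second step; set $\mathcal{B}_1=p(++|00)+p(++|11)+p(+-|01)+p(+-|10)$. For $p,w_{+|0},w_{+|1}\in[0,1]$, let $B_1(p,w_{+|0},w_{+|1})$ be the maximum of $\mathcal{B}_1$ over all initial states with Bloch vector length $p$ and all instruments such that the post-measurement state after measurement $i$ with outcome $+$ has Bloch vector length $w_{+|i}$, $i=0,1$. Then, for fixed $p$ and fixed $w_{+|1-i}$, $B_1(p,w_{+|0},w_{+|1})$ is monotonically non-decreasing as a function of $w_{+|i}$ (equivalently of the purity $\frac12(1+w_{+|i}^2)$). In particular $B_1(p,w_{\max},w_{\max})\ge B_1(p,w_{+|0},w_{+|1})$ where $w_{\max}=\max_i w_{+|i}$.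
   Context: A qubit state is $\varrho=\frac12(\mathbb{1}+r\,\vec\alpha\cdot\vec\sigma)$ with $|\vec\alpha|=1$, $0\le r\le1$ the Bloch vector length, and purity $\frac12(1+r^2)$. An instrument is a collection of completely positive maps indexed by outcomes whose sum is trace preserving. *)

theory Defs
  imports "HOL-Analysis.Analysis"
begin

type_synonym qmat = "complex^2^2"

definition qtrace :: "qmat \<Rightarrow> complex" where
  "qtrace A = (\<Sum>i\<in>UNIV. A $ i $ i)"

definition qscale :: "complex \<Rightarrow> qmat \<Rightarrow> qmat" where
  "qscale c A = (\<chi> i j. c * A $ i $ j)"

definition pauli_x :: qmat where
  "pauli_x = (\<chi> i j. if i \<noteq> j then 1 else 0)"
definition pauli_y :: qmat where
  "pauli_y = (\<chi> i j. if i = 0 \<and> j = 1 then - \<i> else if i = 1 \<and> j = 0 then \<i> else 0)"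
definition pauli_z :: qmat where
  "pauli_z = (\<chi> i j. if i = j then (if i = 0 then 1 else -1) else 0)"

text \<open>Bloch vector r of rho = 1/2 (1 + r . sigma): r_k = tr(rho sigma_k); its length.\<close>
definition bloch_len :: "qmat \<Rightarrow> real" where
  "bloch_len \<rho> = sqrt ((Re (qtrace (\<rho> ** pauli_x)))\<^sup>2 + (Re (qtrace (\<rho> ** pauli_y)))\<^sup>2
                       + (Re (qtrace (\<rho> ** pauli_z)))\<^sup>2)"

text \<open>Positive semidefiniteness of an (n*2)x(n*2) matrix given as an n x n array of 2x2 blocks
  (block (k,l) for k,l < n): v^* X v is real and nonnegative for every vector v.\<close>
definition psd_blocks :: "nat \<Rightarrow> (nat \<Rightarrow> nat \<Rightarrow> qmat) \<Rightarrow> bool" where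
  "psd_blocks n X \<longleftrightarrow> (\<forall>v :: nat \<Rightarrow> complex^2.
     (let q = (\<Sum>k<n. \<Sum>l<n. \<Sum>i\<in>UNIV. cnj (v k $ i) * ((X k l *v v l) $ i))
      in Im q = 0 \<and> Re q \<ge> 0))"

definition psd :: "qmat \<Rightarrow> bool" where
  "psd A \<longleftrightarrow> psd_blocks 1 (\<lambda>_ _. A)"

definition density :: "qmat \<Rightarrow> bool" where
  "density \<rho> \<longleftrightarrow> psd \<rho> \<and> qtrace \<rho> = 1"

definition clinear_map :: "(qmat \<Rightarrow> qmat) \<Rightarrow> bool" where
  "clinear_map \<Phi> \<longleftrightarrow> (\<forall>A B. \<Phi> (A + B) = \<Phi> A + \<Phi> B) \<and> (\<forall>c A. \<Phi> (qscale c A) = qscale c (\<Phi> A))"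

text \<open>Complete positivity: id_n \<otimes> Phi is a positive map for every n.\<close>
definition completely_positive :: "(qmat \<Rightarrow> qmat) \<Rightarrow> bool" where
  "completely_positive \<Phi> \<longleftrightarrow> clinear_map \<Phi> \<and>
     (\<forall>n X. psd_blocks n X \<longrightarrow> psd_blocks n (\<lambda>k l. \<Phi> (X k l)))"

text \<open>A two-outcome instrument (outcome True = +, False = -): CP maps whose sum is trace preserving.\<close>
definition instrument :: "(bool \<Rightarrow> qmat \<Rightarrow> qmat) \<Rightarrow> bool" where
  "instrument J \<longleftrightarrow> (\<forall>a. completely_positive (J a)) \<and>
     (\<forall>A. qtrace (J True A + J False A) = qtrace A)"

text \<open>I x a : operation of setting x (0 or 1) with outcome a. p(ab|xy) = tr(I_{b|y}(I_{a|x}(rho))).\<close>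
definition seq_prob :: "qmat \<Rightarrow> (nat \<Rightarrow> bool \<Rightarrow> qmat \<Rightarrow> qmat) \<Rightarrow> bool \<Rightarrow> bool \<Rightarrow> nat \<Rightarrow> nat \<Rightarrow> real" where
  "seq_prob \<rho> I a b x y = Re (qtrace (I y b (I x a \<rho>)))"

definition B1_expr :: "qmat \<Rightarrow> (nat \<Rightarrow> bool \<Rightarrow> qmat \<Rightarrow> qmat) \<Rightarrow> real" where
  "B1_expr \<rho> I = seq_prob \<rho> I True True 0 0 + seq_prob \<rho> I True True 1 1
                 + seq_prob \<rho> I True False 0 1 + seq_prob \<rho> I True False 1 0"

definition post_state :: "qmat \<Rightarrow> (nat \<Rightarrow> bool \<Rightarrow> qmat \<Rightarrow> qmat) \<Rightarrow> nat \<Rightarrow> qmat" where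
  "post_state \<rho> I x = qscale (1 / qtrace (I x True \<rho>)) (I x True \<rho>)"

definition B1_feasible :: "real \<Rightarrow> real \<Rightarrow> real \<Rightarrow> real set" where
  "B1_feasible p w0 w1 = {B1_expr \<rho> I | \<rho> I.
     density \<rho> \<and> bloch_len \<rho> = p \<and> instrument (I 0) \<and> instrument (I 1) \<and>
     Re (qtrace (I 0 True \<rho>)) > 0 \<and> Re (qtrace (I 1 True \<rho>)) > 0 \<and>
     bloch_len (post_state \<rho> I 0) = w0 \<and> bloch_len (post_state \<rho> I 1) = w1}"

definition B1 :: "real \<Rightarrow> real \<Rightarrow> real \<Rightarrow> real" where
  "B1 p w0 w1 = Sup (B1_feasible p w0 w1)"

end

theory Submission
  imports Defs
begin

lemma two_eq0: "(2::2) = 0" by simp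

lemma UNIV2: "(UNIV::2 set) = {0,1}"
  using exhaust_2 two_eq0 by (metis UNIV_2 insert_commute)

lemma sum2: "(\<Sum>i\<in>(UNIV::2 set). f i) = f 0 + f 1"
  unfolding UNIV2 by simp

lemma all2: "(\<forall>i::2. P i) \<longleftrightarrow> P 0 \<and> P 1"
  by (metis UNIV2 insertE singletonD UNIV_I)

lemma qmat_eq: "(A::qmat) = B \<longleftrightarrow> A$0$0 = B$0$0 \<and> A$0$1 = B$0$1 \<and> A$1$0 = B$1$0 \<and> A$1$1 = B$1$1"
  by (auto simp: vec_eq_iff all2)

definition bm :: "real \<Rightarrow> real \<Rightarrow> real \<Rightarrow> qmat" where
  "bm x y z = (\<chi> i j. if i = 0 then (if j = 0 then complex_of_real ((1+z)/2) else Complex (x/2) (-y/2))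
      else (if j = 0 then Complex (x/2) (y/2) else complex_of_real ((1-z)/2)))"

lemma bm_len: "bloch_len (bm x y z) = sqrt (x^2+y^2+z^2)"
  unfolding bloch_len_def qtrace_def bm_def pauli_x_def pauli_y_def pauli_z_def matrix_matrix_mult_def
  by (simp add: sum2) (simp add: power2_eq_square field_simps)

lemma bm_tr: "qtrace (bm x y z) = 1"
  unfolding qtrace_def bm_def by (simp add: sum2 complex_eq_iff) (simp add: field_simps)

lemma qtrace_add: "qtrace (A + B) = qtrace A + qtrace B"
  unfolding qtrace_def by (simp add: sum.distrib)
lemma qtrace_scale: "qtrace (qscale c A) = c * qtrace A"
  unfolding qtrace_def qscale_def by (simp add: sum_distrib_left)
lemma qscale_qscale: "qscale a (qscale b M) = qscale (a*b) M"
  unfolding qscale_def by (simp add: vec_eq_iff)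
lemma qscale_1: "qscale 1 M = M"
  unfolding qscale_def by (simp add: vec_eq_iff)
lemma qscale_add_left: "qscale (a+b) M = qscale a M + qscale b M"
  unfolding qscale_def by (simp add: vec_eq_iff algebra_simps)
lemma qscale_add_right: "qscale c (M + N) = qscale c M + qscale c N"
  unfolding qscale_def by (simp add: vec_eq_iff algebra_simps)

lemma bm_affine:
  assumes "a + b = 1"
  shows "bm (a*x1+b*x2) (a*y1+b*y2) (a*z1+b*z2) = qscale a (bm x1 y1 z1) + qscale b (bm x2 y2 z2)"
  unfolding qmat_eq using assms
  by (simp add: bm_def qscale_def complex_eq_iff field_simps)

definition herm :: "qmat \<Rightarrow> bool" where
  "herm A \<longleftrightarrow> Im (A$0$0) = 0 \<and> Im (A$1$1) = 0 \<and> A$1$0 = cnj (A$0$1)"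

lemma herm_bm:
  assumes "herm A" "qtrace A = 1"
  shows "A = bm (Re (qtrace (A ** pauli_x))) (Re (qtrace (A ** pauli_y))) (Re (qtrace (A ** pauli_z)))"
  using assms unfolding qmat_eq herm_def
  by (simp add: bm_def qtrace_def pauli_x_def pauli_y_def pauli_z_def matrix_matrix_mult_def sum2 complex_eq_iff)

definition Qf :: "nat \<Rightarrow> (nat \<Rightarrow> nat \<Rightarrow> qmat) \<Rightarrow> (nat \<Rightarrow> complex^2) \<Rightarrow> complex" where
  "Qf n X v = (\<Sum>k<n. \<Sum>l<n. \<Sum>i\<in>UNIV. cnj (v k $ i) * ((X k l *v v l) $ i))"

lemma psd_blocks_Qf: "psd_blocks n X \<longleftrightarrow> (\<forall>v. Im (Qf n X v) = 0 \<and> Re (Qf n X v) \<ge> 0)"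
  unfolding psd_blocks_def Qf_def Let_def by simp

lemma Qf_add: "Qf n (\<lambda>k l. X k l + Y k l) v = Qf n X v + Qf n Y v"
  unfolding Qf_def by (simp add: matrix_vector_mult_add_rdistrib sum.distrib algebra_simps)

definition outer :: "complex^2 \<Rightarrow> qmat" where
  "outer u = (\<chi> i j. u$i * cnj (u$j))"

definition decomp :: "qmat \<Rightarrow> bool" where
  "decomp t \<longleftrightarrow> (\<exists>u1 u2. t = outer u1 + outer u2)"

lemma cp_add:
  assumes "completely_positive f" "completely_positive g"
  shows "completely_positive (\<lambda>A. f A + g A)"
  using assms unfolding completely_positive_def clinear_map_def psd_blocks_Qf
  by (simp add: Qf_add qscale_add_right add_nonneg_nonneg)

lemma cp_id: "completely_positive (\<lambda>A. A)"
  unfolding completely_positive_def clinear_map_def by simp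

lemma cp_replace_outer:
  assumes "completely_positive \<Phi>"
  shows "completely_positive (\<lambda>A. qscale (qtrace (\<Phi> A)) (outer u))"
proof -
  have lin: "clinear_map \<Phi>" using assms unfolding completely_positive_def by simp
  have "clinear_map (\<lambda>A. qscale (qtrace (\<Phi> A)) (outer u))"
    using lin unfolding clinear_map_def by (simp add: qtrace_add qtrace_scale qscale_add_left qscale_qscale)
  moreover have "psd_blocks n (\<lambda>k l. qscale (qtrace (\<Phi> (X k l))) (outer u))" if X: "psd_blocks n X" for n X
  proof -
    define Y where "Y = (\<lambda>k l. \<Phi> (X k l))"
    have Y: "psd_blocks n Y" using assms X unfolding completely_positive_def Y_def by simp
    show ?thesis unfolding psd_blocks_Qf
    proof
      fix v :: "nat \<Rightarrow> complex^2"
      define c where "c = (\<lambda>k. \<Sum>j\<in>UNIV. cnj (u$j) * (v k $ j))"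
      define w where "w = (\<lambda>m::2. \<lambda>k. (\<chi> i. if i = m then c k else 0) :: complex^2)"
      have pt: "(\<Sum>i\<in>UNIV. cnj (v k $ i) * ((qscale (qtrace (\<Phi> (X k l))) (outer u) *v v l) $ i)) =
          (\<Sum>i\<in>UNIV. cnj (w 0 k $ i) * ((Y k l *v w 0 l) $ i)) + (\<Sum>i\<in>UNIV. cnj (w 1 k $ i) * ((Y k l *v w 1 l) $ i))" for k l
          unfolding w_def c_def Y_def qscale_def outer_def qtrace_def matrix_vector_mult_def
          by (simp add: sum2 algebra_simps)
      have eq: "Qf n (\<lambda>k l. qscale (qtrace (\<Phi> (X k l))) (outer u)) v = Qf n Y (w 0) + Qf n Y (w 1)"
        unfolding Qf_def pt by (simp add: sum.distrib)
      show "Im (Qf n (\<lambda>k l. qscale (qtrace (\<Phi> (X k l))) (outer u)) v) = 0 \<and>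
            0 \<le> Re (Qf n (\<lambda>k l. qscale (qtrace (\<Phi> (X k l))) (outer u)) v)"
        using Y unfolding eq psd_blocks_Qf by (simp add: add_nonneg_nonneg)
    qed
  qed
  ultimately show ?thesis unfolding completely_positive_def by blast
qed

lemma cp_replace:
  assumes "completely_positive \<Phi>" "decomp t"
  shows "completely_positive (\<lambda>A. qscale (qtrace (\<Phi> A)) t)"
proof -
  obtain u1 u2 where t: "t = outer u1 + outer u2" using assms(2) unfolding decomp_def by blast
  have "completely_positive (\<lambda>A. qscale (qtrace (\<Phi> A)) (outer u1) + qscale (qtrace (\<Phi> A)) (outer u2))"
    by (rule cp_add) (use assms(1) cp_replace_outer in auto)
  then show ?thesis unfolding t qscale_add_right .
qed


lemma Qf1: "Qf 1 (\<lambda>_ _. A) v = (\<Sum>i\<in>UNIV. cnj (v 0 $ i) * ((A *v v 0) $ i))"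
  unfolding Qf_def by simp

lemma psd_Qf: "psd A \<longleftrightarrow> (\<forall>v. Im (Qf 1 (\<lambda>_ _. A) v) = 0 \<and> Re (Qf 1 (\<lambda>_ _. A) v) \<ge> 0)"
  unfolding psd_def psd_blocks_Qf ..

lemma psd_add: "psd A \<Longrightarrow> psd B \<Longrightarrow> psd (A + B)"
  unfolding psd_Qf using Qf_add[of 1 "\<lambda>_ _. A" "\<lambda>_ _. B"] by simp

lemma psd_outer: "psd (outer u)"
  unfolding psd_Qf Qf1
proof
  fix v :: "nat \<Rightarrow> complex^2"
  define c where "c = (\<Sum>j\<in>UNIV. cnj (u$j) * (v 0 $ j))"
  have "(\<Sum>i\<in>UNIV. cnj (v 0 $ i) * ((outer u *v v 0) $ i)) = cnj c * c"
    unfolding c_def outer_def matrix_vector_mult_def by (simp add: sum2 algebra_simps)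
  then show "Im (\<Sum>i\<in>UNIV. cnj (v 0 $ i) * ((outer u *v v 0) $ i)) = 0 \<and>
         0 \<le> Re (\<Sum>i\<in>UNIV. cnj (v 0 $ i) * ((outer u *v v 0) $ i))"
    using complex_norm_square[of c] by (simp add: mult.commute)
qed

lemma decomp_psd: "decomp t \<Longrightarrow> psd t"
  unfolding decomp_def using psd_add psd_outer by blast

lemma decomp_scale:
  assumes "decomp t" "c \<ge> 0"
  shows "decomp (qscale (complex_of_real c) t)"
proof -
  obtain u1 u2 where t: "t = outer u1 + outer u2" using assms(1) unfolding decomp_def by blast
  define s where "s = complex_of_real (sqrt c)"
  have ss: "s * cnj s = complex_of_real c" unfolding s_def using assms(2)
    by (simp flip: of_real_mult)
  have o: "outer (\<chi> i. s * u$i) = qscale (complex_of_real c) (outer u)" for u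
    unfolding outer_def qscale_def vec_eq_iff using ss by (simp add: algebra_simps ss[symmetric])
  show ?thesis unfolding decomp_def t qscale_add_right o[symmetric] by blast
qed

lemma decomp_bm:
  assumes "x^2 + y^2 + z^2 \<le> 1"
  shows "decomp (bm x y z)"
proof (cases "z > -1")
  case True
  define a where "a = (1+z)/2"
  have a: "a > 0" using True unfolding a_def by simp
  define q where "q = (1-z)/2 - (x^2+y^2)/(4*a)"
  have q: "q \<ge> 0" unfolding q_def a_def using assms True
    by (simp add: field_simps power2_eq_square)
  obtain s where s: "s > 0" "s * s = a" proof (rule that[of "sqrt a"]) qed (use a in auto)
  obtain r where r: "r * r = q" proof (rule that[of "sqrt q"]) qed (use q in auto)
  define u1 :: "complex^2" where "u1 = (\<chi> i. if i = 0 then Complex s 0 else Complex (x/(2 * s)) (y/(2 * s)))"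
  define u2 :: "complex^2" where "u2 = (\<chi> i. if i = 0 then 0 else Complex r 0)"
  have e00: "(outer u1 + outer u2)$0$0 = bm x y z $0$0"
    unfolding bm_def outer_def u1_def u2_def using s(2) unfolding a_def by (simp add: complex_eq_iff)
  have e01: "(outer u1 + outer u2)$0$1 = bm x y z $0$1"
    unfolding bm_def outer_def u1_def u2_def using s by (simp add: complex_eq_iff)
  have e10: "(outer u1 + outer u2)$1$0 = bm x y z $1$0"
    unfolding bm_def outer_def u1_def u2_def using s by (simp add: complex_eq_iff)
  have e11: "(outer u1 + outer u2)$1$1 = bm x y z $1$1"
  proof -
    have hq: "x^2/(4*a) + y^2/(4*a) + r*r = (1-z)/2" using r a unfolding q_def by (simp add: field_simps)
    have hx: "x/(2 * s)*(x/(2 * s)) = x^2/(4*a)" for x using s by (simp add: power2_eq_square mult_ac flip: s(2))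
    show ?thesis
      unfolding bm_def outer_def u1_def u2_def using hq hx[of x] hx[of y] by (simp add: complex_eq_iff)
  qed
  have "bm x y z = outer u1 + outer u2"
    unfolding qmat_eq using e00 e01 e10 e11 by simp
  then show ?thesis unfolding decomp_def by blast
next
  case False
  then have z1: "z \<le> -1" by simp
  have "1 \<le> (-z)^2" using z1 by (intro one_le_power) simp
  then have "1 \<le> z^2" by simp
  then have x2y2: "x^2 + y^2 \<le> 0" and "z^2 \<le> 1" using assms zero_le_power2[of x] zero_le_power2[of y] by linarith+
  then have "\<bar>z\<bar> \<le> 1" by (simp add: abs_square_le_1)
  then have z: "z = -1" using z1 by linarith
  have "x^2 = 0" "y^2 = 0" using x2y2 zero_le_power2[of x] zero_le_power2[of y] by linarith+
  then have xy: "x = 0" "y = 0" by simp_all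
  define u1 :: "complex^2" where "u1 = (\<chi> i. if i = 0 then 0 else 1)"
  have "bm x y z = outer u1 + outer 0"
    unfolding qmat_eq bm_def outer_def u1_def using z xy by (simp add: complex_eq_iff)
  then show ?thesis unfolding decomp_def by blast
qed


lemma Qf_vec: "Qf 1 (\<lambda>_ _. A) (\<lambda>_. (\<chi> i. if i = 0 then a else b)) =
   cnj a * (A$0$0 * a + A$0$1 * b) + cnj b * (A$1$0 * a + A$1$1 * b)"
  unfolding Qf1 matrix_vector_mult_def by (simp add: sum2)

lemma psd_herm:
  assumes "psd A"
  shows "herm A" "Re (A$0$0) \<ge> 0" "Re (A$1$1) \<ge> 0"
proof -
  have q: "Im (Qf 1 (\<lambda>_ _. A) v) = 0 \<and> Re (Qf 1 (\<lambda>_ _. A) v) \<ge> 0" for v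
    using assms unfolding psd_Qf by blast
  have 1: "Im (A$0$0) = 0 \<and> Re (A$0$0) \<ge> 0" using q[of "\<lambda>_. (\<chi> i. if i = 0 then 1 else 0)"]
    unfolding Qf_vec by simp
  have 2: "Im (A$1$1) = 0 \<and> Re (A$1$1) \<ge> 0" using q[of "\<lambda>_. (\<chi> i. if i = 0 then 0 else 1)"]
    unfolding Qf_vec by simp
  have 3: "Im (A$0$0 + A$0$1 + A$1$0 + A$1$1) = 0" using q[of "\<lambda>_. (\<chi> i. if i = 0 then 1 else 1)"]
    unfolding Qf_vec by (simp add: algebra_simps)
  have 4: "Im (A$0$0 + \<i> * A$0$1 - \<i> * A$1$0 + A$1$1) = 0" using q[of "\<lambda>_. (\<chi> i. if i = 0 then 1 else \<i>)"]
    unfolding Qf_vec by (simp add: algebra_simps)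
  have "A$1$0 = cnj (A$0$1)" using 1 2 3 4 by (simp add: complex_eq_iff)
  then show "herm A" using 1 2 unfolding herm_def by simp
  show "Re (A$0$0) \<ge> 0" "Re (A$1$1) \<ge> 0" using 1 2 by simp_all
qed

lemma psd_trace: "psd A \<Longrightarrow> Im (qtrace A) = 0 \<and> Re (qtrace A) \<ge> 0"
  using psd_herm[of A] unfolding qtrace_def herm_def by (simp add: sum2)

lemma herm_scale: "herm A \<Longrightarrow> Im c = 0 \<Longrightarrow> herm (qscale c A)"
  unfolding herm_def qscale_def by (simp add: complex_eq_iff)

lemma cp_pos: "completely_positive \<Phi> \<Longrightarrow> psd A \<Longrightarrow> psd (\<Phi> A)"
  unfolding completely_positive_def psd_def by auto

lemma instr_le:
  assumes "instrument J" "psd A"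
  shows "Re (qtrace (J b A)) \<le> Re (qtrace A)"
proof -
  have cp: "completely_positive (J c)" for c using assms(1) unfolding instrument_def by blast
  have tr: "qtrace (J True A) + qtrace (J False A) = qtrace A"
    using assms(1) unfolding instrument_def by (simp add: qtrace_add)
  have nn: "Re (qtrace (J c A)) \<ge> 0" for c using psd_trace[OF cp_pos[OF cp assms(2)]] by simp
  have r: "Re (qtrace (J True A)) + Re (qtrace (J False A)) = Re (qtrace A)"
    using arg_cong[OF tr, of Re] by simp
  show ?thesis using r nn[of True] nn[of False] by (cases b) auto
qed

lemma seq_le1:
  assumes "density \<rho>" "instrument (I x)" "instrument (I y)"
  shows "seq_prob \<rho> I a b x y \<le> 1"
proof -
  have p: "psd \<rho>" and t: "qtrace \<rho> = 1" using assms(1) unfolding density_def by auto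
  have cp: "completely_positive (I x a)" using assms(2) unfolding instrument_def by blast
  have "Re (qtrace (I y b (I x a \<rho>))) \<le> Re (qtrace (I x a \<rho>))"
    by (rule instr_le[OF assms(3) cp_pos[OF cp p]])
  also have "\<dots> \<le> Re (qtrace \<rho>)" by (rule instr_le[OF assms(2) p])
  finally show ?thesis unfolding seq_prob_def t by simp
qed

lemma lin_add: "clinear_map \<Phi> \<Longrightarrow> \<Phi> (A + B) = \<Phi> A + \<Phi> B"
  unfolding clinear_map_def by blast

lemma lin_scale: "clinear_map \<Phi> \<Longrightarrow> \<Phi> (qscale c A) = qscale c (\<Phi> A)"
  unfolding clinear_map_def by blast

lemma retr_scale:
  assumes "clinear_map \<Phi>" "Im t = 0"
  shows "Re (qtrace (\<Phi> (qscale t A))) = Re t * Re (qtrace (\<Phi> A))"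
  using assms by (simp add: lin_scale qtrace_scale)

lemma retr_comb:
  assumes "clinear_map \<Phi>"
  shows "Re (qtrace (\<Phi> (qscale (complex_of_real a) A + qscale (complex_of_real b) B))) =
         a * Re (qtrace (\<Phi> A)) + b * Re (qtrace (\<Phi> B))"
  using assms by (simp add: lin_scale lin_add qtrace_scale qtrace_add)


lemma dom_core:
  assumes rho: "density \<rho>" and I0: "instrument (I 0)" and I1: "instrument (I 1)"
    and t0: "Re (qtrace (I 0 True \<rho>)) > 0" and t1: "Re (qtrace (I 1 True \<rho>)) > 0"
    and bl: "bloch_len \<rho> = p" and w1: "bloch_len (post_state \<rho> I 1) = w1"
    and tau: "decomp \<tau>" "qtrace \<tau> = 1" "bloch_len \<tau> = w'"
    and h: "Re (qtrace (I 0 True (post_state \<rho> I 0))) + Re (qtrace (I 1 False (post_state \<rho> I 0)))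
           \<le> Re (qtrace (I 0 True \<tau>)) + Re (qtrace (I 1 False \<tau>))"
  shows "\<exists>b\<in>B1_feasible p w' w1. B1_expr \<rho> I \<le> b"
proof -
  define t where "t = qtrace (I 0 True \<rho>)"
  define \<sigma> where "\<sigma> = post_state \<rho> I 0"
  have cp: "completely_positive (I x a)" if "x = 0 \<or> x = 1" for x a
    using I0 I1 that unfolding instrument_def by auto
  have lin: "clinear_map (I x a)" if "x = 0 \<or> x = 1" for x a
    using cp[OF that] unfolding completely_positive_def by blast
  have prho: "psd \<rho>" using rho unfolding density_def by simp
  have tI: "Im t = 0" unfolding t_def using psd_trace[OF cp_pos[OF cp prho]] by simp
  have tnz: "t \<noteq> 0" using t0 unfolding t_def by auto
  have I0r: "I 0 True \<rho> = qscale t \<sigma>"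
    unfolding \<sigma>_def post_state_def t_def[symmetric] qscale_qscale using tnz by (simp add: qscale_1)
  define R where "R = (\<lambda>A. qscale (qtrace (I 0 True A)) \<tau>)"
  define I' where "I' = (\<lambda>x a. if x = 0 \<and> a then R else I x a)"
  have I'0T: "I' 0 True = R" and I'0F: "I' 0 False = I 0 False" and I'1: "I' 1 = I 1"
    unfolding I'_def by auto
  have trR: "qtrace (R A) = qtrace (I 0 True A)" for A unfolding R_def qtrace_scale tau(2) by simp
  have Rr: "R \<rho> = qscale t \<tau>" unfolding R_def t_def ..
  have cpR: "completely_positive R" unfolding R_def by (rule cp_replace[OF cp tau(1)]) simp
  have inst0: "instrument (I' 0)"
    unfolding instrument_def
  proof (intro conjI allI)
    fix a show "completely_positive (I' 0 a)" using cpR cp[of 0 False] I'0T I'0F by (cases a) auto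
  next
    fix A show "qtrace (I' 0 True A + I' 0 False A) = qtrace A"
      using I0 unfolding I'0T I'0F instrument_def by (simp add: qtrace_add trR)
  qed
  have inst1: "instrument (I' 1)" using I1 I'1 by simp
  have ps0: "post_state \<rho> I' 0 = \<tau>"
    unfolding post_state_def I'0T trR Rr t_def[symmetric] qscale_qscale using tnz by (simp add: qscale_1 qtrace_scale tau(2))
  have ps1: "post_state \<rho> I' 1 = post_state \<rho> I 1" unfolding post_state_def I'1 ..
  have pos0: "Re (qtrace (I' 0 True \<rho>)) > 0" using t0 unfolding I'0T trR .
  have pos1: "Re (qtrace (I' 1 True \<rho>)) > 0" using t1 unfolding I'1 .
  have mem: "B1_expr \<rho> I' \<in> B1_feasible p w' w1"
    unfolding B1_feasible_def
    apply (rule CollectI, rule exI[of _ \<rho>], rule exI[of _ I'])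
    using rho bl inst0 inst1 pos0 pos1 ps0 ps1 tau(3) w1 by simp
  have e1: "B1_expr \<rho> I = Re t * (Re (qtrace (I 0 True \<sigma>)) + Re (qtrace (I 1 False \<sigma>)))
       + Re (qtrace (I 1 True (I 1 True \<rho>))) + Re (qtrace (I 0 False (I 1 True \<rho>)))"
    unfolding B1_expr_def seq_prob_def I0r
    using retr_scale[OF lin tI, of 0 True \<sigma>] retr_scale[OF lin tI, of 1 False \<sigma>] by (simp add: algebra_simps)
  have e2: "B1_expr \<rho> I' = Re t * (Re (qtrace (I 0 True \<tau>)) + Re (qtrace (I 1 False \<tau>)))
       + Re (qtrace (I 1 True (I 1 True \<rho>))) + Re (qtrace (I 0 False (I 1 True \<rho>)))"
    unfolding B1_expr_def seq_prob_def I'0T I'0F I'1 trR Rr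
    using retr_scale[OF lin tI, of 0 True \<tau>] retr_scale[OF lin tI, of 1 False \<tau>] by (simp add: algebra_simps)
  have "B1_expr \<rho> I \<le> B1_expr \<rho> I'"
    unfolding e1 e2 using h t0 unfolding \<sigma>_def[symmetric] t_def[symmetric]
    by (simp add: mult_left_mono)
  then show ?thesis using mem by blast
qed


lemma dom:
  assumes rho: "density \<rho>" and I0: "instrument (I 0)" and I1: "instrument (I 1)"
    and t0: "Re (qtrace (I 0 True \<rho>)) > 0" and t1: "Re (qtrace (I 1 True \<rho>)) > 0"
    and bl: "bloch_len \<rho> = p" and w0: "bloch_len (post_state \<rho> I 0) = w0"
    and w1: "bloch_len (post_state \<rho> I 1) = w1"
    and ww: "w0 \<le> w'" "w' \<le> 1"
  shows "\<exists>b\<in>B1_feasible p w' w1. B1_expr \<rho> I \<le> b"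
proof -
  define t where "t = qtrace (I 0 True \<rho>)"
  define \<sigma> where "\<sigma> = post_state \<rho> I 0"
  have cp: "completely_positive (I x a)" if "x = 0 \<or> x = 1" for x a
    using I0 I1 that unfolding instrument_def by auto
  have lin: "clinear_map (I x a)" if "x = 0 \<or> x = 1" for x a
    using cp[OF that] unfolding completely_positive_def by blast
  have prho: "psd \<rho>" using rho unfolding density_def by simp
  have ps: "psd (I 0 True \<rho>)" using cp_pos[OF cp prho] by simp
  have tI: "Im t = 0" unfolding t_def using psd_trace[OF ps] by simp
  have tnz: "t \<noteq> 0" using t0 unfolding t_def by auto
  have hs: "herm \<sigma>" unfolding \<sigma>_def post_state_def t_def[symmetric]
    by (rule herm_scale[OF psd_herm(1)[OF ps]]) (use tI in \<open>simp add: Im_divide\<close>)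
  have trs: "qtrace \<sigma> = 1" unfolding \<sigma>_def post_state_def t_def[symmetric] qtrace_scale
    using tnz unfolding t_def by simp
  define rx where "rx = Re (qtrace (\<sigma> ** pauli_x))"
  define ry where "ry = Re (qtrace (\<sigma> ** pauli_y))"
  define rz where "rz = Re (qtrace (\<sigma> ** pauli_z))"
  have sbm: "\<sigma> = bm rx ry rz" unfolding rx_def ry_def rz_def by (rule herm_bm[OF hs trs])
  have len: "sqrt (rx^2 + ry^2 + rz^2) = w0" using w0 unfolding \<sigma>_def[symmetric] bloch_len_def rx_def ry_def rz_def .
  have w0nn: "w0 \<ge> 0" using len by auto
  have r2: "rx^2 + ry^2 + rz^2 = w0^2" using len by auto
  define nx where "nx = (if w0 = 0 then 0 else rx / w0)"
  define ny where "ny = (if w0 = 0 then 0 else ry / w0)"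
  define nz where "nz = (if w0 = 0 then 1 else rz / w0)"
  have rn: "rx = w0 * nx \<and> ry = w0 * ny \<and> rz = w0 * nz"
  proof (cases "w0 = 0")
    case True
    then have "rx^2 + ry^2 + rz^2 = 0" using r2 by simp
    then have "rx^2 = 0" "ry^2 = 0" "rz^2 = 0"
      using zero_le_power2[of rx] zero_le_power2[of ry] zero_le_power2[of rz] by linarith+
    then have "rx = 0 \<and> ry = 0 \<and> rz = 0" by simp
    then show ?thesis using True by simp
  qed (simp add: nx_def ny_def nz_def)
  have nn: "nx^2 + ny^2 + nz^2 = 1"
  proof (cases "w0 = 0")
    case False
    then show ?thesis using r2 unfolding nx_def ny_def nz_def by (simp add: field_simps power_divide)
  qed (simp add: nx_def ny_def nz_def)
  define lam where "lam = (if w' = 0 then 0 else w0 / w')"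
  have lam: "0 \<le> lam" "lam \<le> 1" "lam * w' = w0"
    using ww w0nn unfolding lam_def by (auto simp: field_simps)
  define a where "a = (1 + lam) / 2"
  define b where "b = (1 - lam) / 2"
  have ab: "a + b = 1" "a > 0" "b \<ge> 0" using lam unfolding a_def b_def by (auto simp: field_simps)
  define tp where "tp = bm (w' * nx) (w' * ny) (w' * nz)"
  define tm where "tm = bm (-(w' * nx)) (-(w' * ny)) (-(w' * nz))"
  have comb: "a * c + b * (- c) = lam * c" for c unfolding a_def b_def by (simp add: field_simps)
  have sig: "\<sigma> = qscale (complex_of_real a) tp + qscale (complex_of_real b) tm"
    unfolding tp_def tm_def bm_affine[OF ab(1), symmetric] comb sbm
    using rn lam(3) by (simp add: mult.assoc[symmetric])
  define h where "h = (\<lambda>X. Re (qtrace (I 0 True X)) + Re (qtrace (I 1 False X)))"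
  have hs: "h \<sigma> = a * h tp + b * h tm"
    unfolding h_def sig using retr_comb[OF lin[of 0 True]] retr_comb[OF lin[of 1 False]] by (simp add: algebra_simps)
  have "h \<sigma> \<le> h tp \<or> h \<sigma> \<le> h tm"
  proof (rule ccontr)
    assume "\<not> ?thesis"
    then have "h tp < h \<sigma>" "h tm < h \<sigma>" by auto
    then have "a * h tp < a * h \<sigma>" "b * h tm \<le> b * h \<sigma>" using ab by (auto intro: mult_left_mono)
    then have "h \<sigma> < (a + b) * h \<sigma>" using hs by (simp add: algebra_simps)
    then show False using ab by simp
  qed
  moreover have "w'^2 \<ge> 0" "w' \<ge> 0" using ww w0nn by auto
  then have sq: "(w'*nx)^2 + (w'*ny)^2 + (w'*nz)^2 = w'^2" "(-(w'*nx))^2 + (-(w'*ny))^2 + (-(w'*nz))^2 = w'^2"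
    using nn by (simp_all add: power_mult_distrib flip: distrib_left)
  have w'2: "w'^2 \<le> 1" using ww w0nn by (simp add: power_le_one)
  have tpp: "decomp tp" "qtrace tp = 1" "bloch_len tp = w'"
    unfolding tp_def using sq(1) w'2 \<open>w' \<ge> 0\<close> by (simp_all add: decomp_bm bm_tr bm_len)
  have tmm: "decomp tm" "qtrace tm = 1" "bloch_len tm = w'"
    unfolding tm_def using sq(2) w'2 \<open>w' \<ge> 0\<close> by (simp_all add: decomp_bm bm_tr bm_len del: minus_mult_right)
  ultimately show ?thesis
    using dom_core[OF rho I0 I1 t0 t1 bl w1, of tp w'] dom_core[OF rho I0 I1 t0 t1 bl w1, of tm w']
    using tpp tmm unfolding h_def \<sigma>_def by blast
qed


lemma feas_bdd: "bdd_above (B1_feasible p w0 w1)"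
proof (rule bdd_aboveI[of _ 4])
  fix x assume "x \<in> B1_feasible p w0 w1"
  then obtain \<rho> I where x: "x = B1_expr \<rho> I" and d: "density \<rho>" "instrument (I 0)" "instrument (I 1)"
    unfolding B1_feasible_def by blast
  show "x \<le> 4" unfolding x B1_expr_def
    using seq_le1[of \<rho> I 0 0 True True, OF d(1) d(2) d(2)] seq_le1[of \<rho> I 1 1 True True, OF d(1) d(3) d(3)]
      seq_le1[of \<rho> I 0 1 True False, OF d(1) d(2) d(3)] seq_le1[of \<rho> I 1 0 True False, OF d(1) d(3) d(2)]
    by linarith
qed

lemma feas_sym: "B1_feasible p w0 w1 \<subseteq> B1_feasible p w1 w0"
proof
  fix x assume "x \<in> B1_feasible p w0 w1"
  then obtain \<rho> I where x: "x = B1_expr \<rho> I" and d: "density \<rho>" "bloch_len \<rho> = p" "instrument (I 0)" "instrument (I 1)"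
     "Re (qtrace (I 0 True \<rho>)) > 0" "Re (qtrace (I 1 True \<rho>)) > 0"
     "bloch_len (post_state \<rho> I 0) = w0" "bloch_len (post_state \<rho> I 1) = w1"
    unfolding B1_feasible_def by blast
  define I' where "I' = (\<lambda>x::nat. if x = 0 then I 1 else I 0)"
  have I': "I' 0 = I 1" "I' 1 = I 0" unfolding I'_def by auto
  have ps: "post_state \<rho> I' 0 = post_state \<rho> I 1" "post_state \<rho> I' 1 = post_state \<rho> I 0"
    unfolding post_state_def I' by auto
  have "x = B1_expr \<rho> I'" unfolding x B1_expr_def seq_prob_def I' by simp
  then show "x \<in> B1_feasible p w1 w0"
    unfolding B1_feasible_def
    apply (intro CollectI exI[of _ \<rho>] exI[of _ I'])
    using d ps I' by simp
qed

lemma B1_sym: "B1 p w0 w1 = B1 p w1 w0"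
  unfolding B1_def using feas_sym[of p w0 w1] feas_sym[of p w1 w0] by (metis subset_antisym)

lemma feas_ne:
  assumes "0 \<le> p" "p \<le> 1" "0 \<le> w0" "w0 \<le> 1" "0 \<le> w1" "w1 \<le> 1"
  shows "B1_feasible p w0 w1 \<noteq> {}"
proof -
  define \<rho> where "\<rho> = bm 0 0 p"
  define \<tau> where "\<tau> = (\<lambda>x::nat. bm 0 0 (if x = 0 then w0 else w1))"
  define I where "I = (\<lambda>(x::nat) (a::bool) A. qscale (qtrace A) (qscale (complex_of_real (1/2)) (\<tau> x)))"
  have p2: "p^2 \<le> 1" using assms by (simp add: power_le_one)
  have rho: "density \<rho>" unfolding density_def \<rho>_def using decomp_psd[OF decomp_bm] p2 bm_tr by simp
  have bl: "bloch_len \<rho> = p" unfolding \<rho>_def bm_len using assms by simp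
  have dt: "decomp (qscale (complex_of_real (1/2)) (\<tau> x))" for x
    unfolding \<tau>_def by (rule decomp_scale[OF decomp_bm]) (use assms in \<open>auto simp: power_le_one\<close>)
  have trt: "qtrace (\<tau> x) = 1" for x unfolding \<tau>_def bm_tr ..
  have inst: "instrument (I x)" for x
    unfolding instrument_def
  proof (intro conjI allI)
    fix a show "completely_positive (I x a)"
      unfolding I_def using cp_replace[OF cp_id dt[of x]] by simp
  next
    fix A show "qtrace (I x True A + I x False A) = qtrace A"
      unfolding I_def qtrace_add qtrace_scale trt by (simp add: field_simps)
  qed
  have trr: "qtrace \<rho> = 1" unfolding \<rho>_def bm_tr ..
  have pos: "Re (qtrace (I x True \<rho>)) > 0" for x unfolding I_def qtrace_scale trr trt by simp
  have ps: "post_state \<rho> I x = \<tau> x" for x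
    unfolding post_state_def I_def qtrace_scale trr trt qscale_qscale by (simp add: qscale_1)
  have bt: "bloch_len (\<tau> x) = (if x = 0 then w0 else w1)" for x
    unfolding \<tau>_def bm_len using assms by simp
  have "B1_expr \<rho> I \<in> B1_feasible p w0 w1"
    unfolding B1_feasible_def
    apply (intro CollectI exI[of _ \<rho>] exI[of _ I])
    using rho bl inst pos ps bt by simp
  then show ?thesis by blast
qed

lemma mono_first:
  assumes "0 \<le> p" "p \<le> 1" "0 \<le> w1" "w1 \<le> 1" "0 \<le> a" "a \<le> b" "b \<le> 1"
  shows "B1 p a w1 \<le> B1 p b w1"
  unfolding B1_def
proof (rule cSup_mono[OF feas_ne feas_bdd])
  fix x assume "x \<in> B1_feasible p a w1"
  then obtain \<rho> I where x: "x = B1_expr \<rho> I" and d: "density \<rho>" "bloch_len \<rho> = p" "instrument (I 0)" "instrument (I 1)"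
     "Re (qtrace (I 0 True \<rho>)) > 0" "Re (qtrace (I 1 True \<rho>)) > 0"
     "bloch_len (post_state \<rho> I 0) = a" "bloch_len (post_state \<rho> I 1) = w1"
    unfolding B1_feasible_def by blast
  show "\<exists>y\<in>B1_feasible p b w1. x \<le> y" unfolding x
    by (rule dom[OF d(1,3,4,5,6,2,7,8)]) (use assms in auto)
qed (use assms in auto)

theorem mainTheorem4:
  fixes p :: real
  assumes "0 \<le> p" "p \<le> 1"
  shows "(\<forall>w1\<in>{0..1}. mono_on {0..1} (\<lambda>w0. B1 p w0 w1))
       \<and> (\<forall>w0\<in>{0..1}. mono_on {0..1} (\<lambda>w1. B1 p w0 w1))
       \<and> (\<forall>w0\<in>{0..1}. \<forall>w1\<in>{0..1}. B1 p (max w0 w1) (max w0 w1) \<ge> B1 p w0 w1)"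
proof (intro conjI ballI)
  fix w1 :: real assume "w1 \<in> {0..1}"
  then show "mono_on {0..1} (\<lambda>w0. B1 p w0 w1)"
    by (intro mono_onI) (use assms mono_first in auto)
next
  fix w0 :: real assume "w0 \<in> {0..1}"
  then show "mono_on {0..1} (\<lambda>w1. B1 p w0 w1)"
  proof (intro mono_onI)
    fix r s :: real assume rs: "r \<in> {0..1}" "s \<in> {0..1}" "r \<le> s"
    have "B1 p r w0 \<le> B1 p s w0" using \<open>w0 \<in> {0..1}\<close> rs assms by (intro mono_first) auto
    then show "B1 p w0 r \<le> B1 p w0 s" by (simp only: B1_sym[of p w0 r] B1_sym[of p w0 s])
  qed
next
  fix w0 w1 :: real assume w: "w0 \<in> {0..1}" "w1 \<in> {0..1}"
  have "B1 p w0 w1 \<le> B1 p (max w0 w1) w1"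
    by (rule mono_first) (use assms w in auto)
  also have "\<dots> = B1 p w1 (max w0 w1)" by (rule B1_sym)
  also have "\<dots> \<le> B1 p (max w0 w1) (max w0 w1)"
    by (rule mono_first) (use assms w in auto)
  finally show "B1 p w0 w1 \<le> B1 p (max w0 w1) (max w0 w1)" .
qed

end
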